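(* For every $\ell\ge0$, the coefficients of $\hbar^s$, $s\le\ell$, in the asymptotic expansion $$\mathrm{Tr}(t,\hbar)\sim\sum_{m=0}^\infty\frac{(it)^m}{m!}\Big(\sum_{|r|\ge1}\hbar^{|r|-1}c_r(\hbar)\Big(\frac1tD_\theta\Big)^r\Big)^m\frac{e^{\frac{it}{2}\sum_j\theta_j}}{\prod_j(1-e^{it\theta_j})}\Bigg|_{\theta=u}$$ determine the coefficients of $\hbar^s$, $s\le\ell$, in the series $$V(t,\hbar)=\sum_{|r|\ge1}\hbar^{|r|-1}c_r(\hbar)\Big(\frac1tD_\theta\Big)^r\frac{e^{\frac{it}{2}\sum_j\theta_j}}{\prod_j(1-e^{it\theta_j})}\Bigg|_{\theta=u}.$$
   Context: Here $u=(u_1,\dots,u_n)$ has positive entries linearly independent over $\mathbb{Q}$, $D_\theta=-i(\partial_{\theta_1},\dots,\partial_{\theta_n})$, $r\in\mathbb{Z}_{\ge0}^n$, and $c_r(\hbar)=\sum_{i\ge0}c_{r,i}\hbar^{|r|-1+i}$ with $c_r(0)=0$ when $|r|=1$ (the coefficients of the semi-classical Birkhoff canonical form). *)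

theory Defs
  imports "HOL-Complex_Analysis.Complex_Analysis"
begin

text \<open>Functions of theta are taken on C^n (theta :: nat => complex, only theta 0..n-1 used);
  the relevant function is holomorphic in each theta_j, so complex partial derivatives
  agree with the real ones at real points.\<close>

definition multi_idx :: "nat \<Rightarrow> (nat \<Rightarrow> nat) set" where
  "multi_idx n = {r. \<forall>j. n \<le> j \<longrightarrow> r j = 0}"

definition mabs :: "nat \<Rightarrow> (nat \<Rightarrow> nat) \<Rightarrow> nat" where
  "mabs n r = (\<Sum>j<n. r j)"

definition pdiff :: "nat \<Rightarrow> ((nat \<Rightarrow> complex) \<Rightarrow> complex) \<Rightarrow> (nat \<Rightarrow> complex) \<Rightarrow> complex" where
  "pdiff j g = (\<lambda>\<theta>. deriv (\<lambda>z. g (\<theta>(j := z))) (\<theta> j))"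

fun Dmulti :: "nat \<Rightarrow> (nat \<Rightarrow> nat) \<Rightarrow> ((nat \<Rightarrow> complex) \<Rightarrow> complex) \<Rightarrow> (nat \<Rightarrow> complex) \<Rightarrow> complex" where
  "Dmulti 0 r g = g"
| "Dmulti (Suc k) r g = ((\<lambda>h \<theta>. - \<i> * pdiff k h \<theta>) ^^ r k) (Dmulti k r g)"

definition Fth :: "nat \<Rightarrow> real \<Rightarrow> (nat \<Rightarrow> complex) \<Rightarrow> complex" where
  "Fth n t \<theta> = exp (\<i> * of_real t / 2 * (\<Sum>j<n. \<theta> j)) / (\<Prod>j<n. (1 - exp (\<i> * of_real t * \<theta> j)))"

text \<open>hbar-weight of the term c_{r,i} hbar^{|r|-1+|r|-1+i}\<close>
definition wt :: "nat \<Rightarrow> (nat \<Rightarrow> nat) \<Rightarrow> nat \<Rightarrow> nat" where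
  "wt n r i = 2 * mabs n r - 2 + i"

definition terms :: "nat \<Rightarrow> nat \<Rightarrow> ((nat \<Rightarrow> nat) \<times> nat) set" where
  "terms n s = {(r, i). r \<in> multi_idx n \<and> 1 \<le> mabs n r \<and> wt n r i \<le> s}"

text \<open>Pw n u c t m s theta: coefficient of hbar^s in L^m F, where
  L = sum_{|r|>=1} hbar^{|r|-1} c_r(hbar) (1/t D_theta)^r,
  c_r(hbar) = sum_i c r i hbar^{|r|-1+i}.\<close>
primrec Pw :: "nat \<Rightarrow> ((nat \<Rightarrow> nat) \<Rightarrow> nat \<Rightarrow> real) \<Rightarrow> real \<Rightarrow> nat \<Rightarrow> nat
    \<Rightarrow> (nat \<Rightarrow> complex) \<Rightarrow> complex" where
  "Pw n c t 0 s = (if s = 0 then Fth n t else (\<lambda>_. 0))"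
| "Pw n c t (Suc m) s = (\<lambda>\<theta>. \<Sum>(r, i)\<in>terms n s.
      of_real (c r i) * (1 / of_real t) ^ mabs n r * Dmulti n r (Pw n c t m (s - wt n r i)) \<theta>)"

text \<open>coefficient of hbar^s in the expansion of Tr(t,hbar); since L = O(hbar)
  (under the hypothesis c_r(0)=0 for |r|=1), only m <= s contribute.\<close>
definition TrCoef :: "nat \<Rightarrow> (nat \<Rightarrow> real) \<Rightarrow> ((nat \<Rightarrow> nat) \<Rightarrow> nat \<Rightarrow> real) \<Rightarrow> nat \<Rightarrow> real \<Rightarrow> complex" where
  "TrCoef n u c s t = (\<Sum>m\<le>s. (\<i> * of_real t) ^ m / of_nat (fact m) * Pw n c t m s (\<lambda>j. of_real (u j)))"

definition VCoef :: "nat \<Rightarrow> (nat \<Rightarrow> real) \<Rightarrow> ((nat \<Rightarrow> nat) \<Rightarrow> nat \<Rightarrow> real) \<Rightarrow> nat \<Rightarrow> real \<Rightarrow> complex" where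
  "VCoef n u c s t = Pw n c t 1 s (\<lambda>j. of_real (u j))"

definition BNF_coeffs :: "nat \<Rightarrow> ((nat \<Rightarrow> nat) \<Rightarrow> nat \<Rightarrow> real) \<Rightarrow> bool" where
  "BNF_coeffs n c \<longleftrightarrow> (\<forall>r. r \<in> multi_idx n \<and> mabs n r = 1 \<longrightarrow> c r 0 = 0)"

definition tdom :: "nat \<Rightarrow> (nat \<Rightarrow> real) \<Rightarrow> real set" where
  "tdom n u = {t. \<forall>j<n. exp (\<i> * of_real t * of_real (u j)) \<noteq> 1}"

end

theory Submission
  imports Defs
begin

lemma Dmulti_zero: "Dmulti k r (\<lambda>_. 0) = (\<lambda>_. 0)"
proof (induction k)
  case 0 then show ?case by simp
next
  case (Suc k)
  have "((\<lambda>h \<theta>. - \<i> * pdiff k h \<theta>) ^^ m) (\<lambda>_. 0) = (\<lambda>_. 0)" for m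
    by (induction m) (auto simp: pdiff_def)
  then show ?case using Suc by simp
qed

lemma Pw_agree:
  assumes "\<forall>(r,i)\<in>terms n k. c r i = c' r i" "s \<le> k"
  shows "Pw n c t m s = Pw n c' t m s"
  using assms(2)
proof (induction m arbitrary: s)
  case 0 then show ?case by simp
next
  case (Suc m)
  have sub: "terms n s \<subseteq> terms n k" using Suc.prems by (auto simp: terms_def)
  show ?case
    apply (rule ext, simp only: Pw.simps, rule sum.cong[OF refl], clarify)
    subgoal for \<theta> r i
    proof -
      assume x: "(r,i) \<in> terms n s"
      have "c r i = c' r i" using assms(1) sub x by auto
      moreover have "Pw n c t m (s - wt n r i) = Pw n c' t m (s - wt n r i)"
        using Suc.IH Suc.prems by simp
      ultimately show ?thesis by simp
    qed
    done
qed

lemma wt0: "1 \<le> mabs n r \<Longrightarrow> wt n r i = 0 \<Longrightarrow> mabs n r = 1 \<and> i = 0"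
  by (auto simp: wt_def)

lemma BNF_zero: "BNF_coeffs n c \<Longrightarrow> (r,i) \<in> terms n s \<Longrightarrow> wt n r i = 0 \<Longrightarrow> c r i = 0"
  using wt0 by (auto simp: BNF_coeffs_def terms_def)

lemma Pw_Suc_0: "BNF_coeffs n c \<Longrightarrow> Pw n c t (Suc m) 0 = (\<lambda>_. 0)"
  by (rule ext, simp, rule sum.neutral) (auto simp: BNF_zero terms_def)

lemma Pw_SS:
  assumes c: "BNF_coeffs n c" and c': "BNF_coeffs n c'"
    and ag: "\<forall>(r,i)\<in>terms n s. wt n r i < s \<longrightarrow> c r i = c' r i"
  shows "Pw n c t (Suc (Suc m)) s = Pw n c' t (Suc (Suc m)) s"
  apply (rule ext, simp only: Pw.simps, rule sum.cong[OF refl], clarify)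
  subgoal for \<theta> r i
  proof -
  assume x: "(r,i) \<in> terms n s"
  have le: "wt n r i \<le> s" using x by (auto simp: terms_def)
  show ?thesis
  proof (cases "wt n r i = s")
    case True
    then show ?thesis using Pw_Suc_0[OF c] Pw_Suc_0[OF c'] by (simp add: Dmulti_zero)
  next
    case False
    then have lt: "wt n r i < s" using le by simp
    have ceq: "c r i = c' r i" using ag x lt by auto
    show ?thesis
    proof (cases "wt n r i = 0")
      case True
      then show ?thesis using BNF_zero[OF c] BNF_zero[OF c'] x by simp
    next
      case False
      have ag2: "\<forall>(r,i)\<in>terms n (s - 1). c r i = c' r i"
        using ag lt by (auto simp: terms_def)
      have "Pw n c t (Suc m) (s - wt n r i) = Pw n c' t (Suc m) (s - wt n r i)"
        by (rule Pw_agree[OF ag2]) (use False lt in simp)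
      then show ?thesis using ceq by simp
    qed
  qed
  qed
  done

definition PF :: "nat \<Rightarrow> (nat \<Rightarrow> complex \<Rightarrow> complex) \<Rightarrow> (nat \<Rightarrow> complex) \<Rightarrow> complex" where
  "PF n F = (\<lambda>\<theta>. \<Prod>j<n. F j (\<theta> j))"

definition UU :: "nat \<Rightarrow> complex set \<Rightarrow> (nat \<Rightarrow> complex) set" where
  "UU n S = {\<theta>. \<forall>j<n. \<theta> j \<in> S}"

lemma PF_upd: "k < n \<Longrightarrow> PF n (F(k := f)) \<theta> = f (\<theta> k) * (\<Prod>j\<in>{..<n}-{k}. F j (\<theta> j))"
  unfolding PF_def by (subst prod.remove[of _ k]) (auto intro!: prod.cong)

lemma PF_split: "k < n \<Longrightarrow> PF n F \<theta> = F k (\<theta> k) * (\<Prod>j\<in>{..<n}-{k}. F j (\<theta> j))"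
  using PF_upd[of k n F "F k"] by simp

lemma pdiff_cong:
  assumes "k < n" "open S" "\<forall>\<theta>\<in>UU n S. h1 \<theta> = h2 \<theta>" "\<theta> \<in> UU n S"
  shows "pdiff k h1 \<theta> = pdiff k h2 \<theta>"
  unfolding pdiff_def
proof (rule deriv_cong_ev[OF _ refl])
  have "\<theta> k \<in> S" using assms by (auto simp: UU_def)
  then have "eventually (\<lambda>z. z \<in> S) (nhds (\<theta> k))"
    using assms(2) eventually_nhds by blast
  then show "\<forall>\<^sub>F x in nhds (\<theta> k). h1 (\<theta>(k := x)) = h2 (\<theta>(k := x))"
  proof (rule eventually_mono)
    fix z assume "z \<in> S"
    then have "\<theta>(k := z) \<in> UU n S" using assms(4) by (auto simp: UU_def)
    then show "h1 (\<theta>(k := z)) = h2 (\<theta>(k := z))" using assms(3) by blast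
  qed
qed

lemma iter_cong:
  assumes "k < n" "open S" "\<forall>\<theta>\<in>UU n S. h1 \<theta> = h2 \<theta>"
  shows "\<forall>\<theta>\<in>UU n S. ((\<lambda>h \<theta>. - \<i> * pdiff k h \<theta>) ^^ m) h1 \<theta> = ((\<lambda>h \<theta>. - \<i> * pdiff k h \<theta>) ^^ m) h2 \<theta>"
proof (induction m)
  case 0 then show ?case using assms by simp
next
  case (Suc m)
  then show ?case using pdiff_cong[OF assms(1,2) Suc] by simp
qed

lemma pdiff_PF:
  assumes "k < n" "open S" "F k holomorphic_on S" "\<theta> \<in> UU n S"
  shows "pdiff k (PF n F) \<theta> = PF n (F(k := deriv (F k))) \<theta>"
proof -
  have tk: "\<theta> k \<in> S" using assms by (auto simp: UU_def)
  have "(\<lambda>z. PF n F (\<theta>(k := z))) = (\<lambda>z. (\<Prod>j\<in>{..<n}-{k}. F j (\<theta> j)) * F k z)"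
    using PF_split[OF assms(1), of F] by (auto simp: mult.commute intro!: prod.cong)
  then have "pdiff k (PF n F) \<theta> = (\<Prod>j\<in>{..<n}-{k}. F j (\<theta> j)) * deriv (F k) (\<theta> k)"
    unfolding pdiff_def
    using deriv_cmult holomorphic_on_imp_differentiable_at[OF assms(3) assms(2) tk] by metis
  then show ?thesis using PF_upd[OF assms(1)] by (simp add: mult.commute)
qed

lemma iter_PF:
  assumes "k < n" "open S" "\<forall>j<n. F j holomorphic_on S"
  shows "\<forall>\<theta>\<in>UU n S. ((\<lambda>h \<theta>. - \<i> * pdiff k h \<theta>) ^^ m) (PF n F) \<theta>
     = PF n (F(k := (\<lambda>z. (- \<i>) ^ m * (deriv ^^ m) (F k) z))) \<theta>"
proof (induction m)
  case 0
  have "F(k := (\<lambda>z. (- \<i>) ^ 0 * (deriv ^^ 0) (F k) z)) = F" by (auto simp: fun_eq_iff)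
  then show ?case by simp
next
  case (Suc m)
  let ?Fm = "F(k := (\<lambda>z. (- \<i>) ^ m * (deriv ^^ m) (F k) z))"
  have hol: "?Fm k holomorphic_on S"
    using assms by (auto intro!: holomorphic_intros)
  show ?case
  proof
    fix \<theta> assume th: "\<theta> \<in> UU n S"
    have tk: "\<theta> k \<in> S" using th assms by (auto simp: UU_def)
    have "((\<lambda>h \<theta>. - \<i> * pdiff k h \<theta>) ^^ Suc m) (PF n F) \<theta> = - \<i> * pdiff k (PF n ?Fm) \<theta>"
      using pdiff_cong[OF assms(1,2) Suc th] by (simp add: fun_upd_def)
    also have "\<dots> = - \<i> * PF n (?Fm(k := deriv (?Fm k))) \<theta>"
      using pdiff_PF[OF assms(1,2), of ?Fm, OF hol th] by simp
    also have "\<dots> = PF n (F(k := (\<lambda>z. (- \<i>) ^ Suc m * (deriv ^^ Suc m) (F k) z))) \<theta>"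
    proof -
      have d: "deriv (\<lambda>z. (- \<i>) ^ m * (deriv ^^ m) (F k) z) (\<theta> k) = (- \<i>) ^ m * (deriv ^^ Suc m) (F k) (\<theta> k)"
        using deriv_cmult holomorphic_on_imp_differentiable_at[OF holomorphic_higher_deriv[of "F k" S m] assms(2) tk]
          assms by auto
      show ?thesis using d by (simp add: PF_upd[OF assms(1)])
    qed
    finally show "((\<lambda>h \<theta>. - \<i> * pdiff k h \<theta>) ^^ Suc m) (PF n F) \<theta> = PF n (F(k := (\<lambda>z. (- \<i>) ^ Suc m * (deriv ^^ Suc m) (F k) z))) \<theta>" .
  qed
qed

lemma Dmulti_PF:
  assumes "k \<le> n" "open S" "\<forall>j<n. F j holomorphic_on S"
  shows "\<forall>\<theta>\<in>UU n S. Dmulti k r (PF n F) \<theta>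
     = PF n (\<lambda>j. if j < k then (\<lambda>z. (- \<i>) ^ r j * (deriv ^^ r j) (F j) z) else F j) \<theta>"
  using assms(1)
proof (induction k)
  case 0 then show ?case by simp
next
  case (Suc k)
  let ?Fk = "\<lambda>j. if j < k then (\<lambda>z. (- \<i>) ^ r j * (deriv ^^ r j) (F j) z) else F j"
  have kn: "k < n" using Suc by simp
  have hol: "\<forall>j<n. ?Fk j holomorphic_on S" using assms by (auto intro!: holomorphic_intros)
  have eq: "?Fk(k := (\<lambda>z. (- \<i>) ^ r k * (deriv ^^ r k) (?Fk k) z)) =
     (\<lambda>j. if j < Suc k then (\<lambda>z. (- \<i>) ^ r j * (deriv ^^ r j) (F j) z) else F j)"
    by (auto simp: fun_eq_iff)
  show ?case
  proof
    fix \<theta> assume th: "\<theta> \<in> UU n S"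
    have "Dmulti (Suc k) r (PF n F) \<theta> = ((\<lambda>h \<theta>. - \<i> * pdiff k h \<theta>) ^^ r k) (PF n ?Fk) \<theta>"
      using iter_cong[OF kn assms(2), of "Dmulti k r (PF n F)" "PF n ?Fk" "r k"] Suc th by simp
    also have "\<dots> = PF n (?Fk(k := (\<lambda>z. (- \<i>) ^ r k * (deriv ^^ r k) (?Fk k) z))) \<theta>"
      using iter_PF[OF kn assms(2) hol] th by blast
    finally show "Dmulti (Suc k) r (PF n F) \<theta> = PF n (\<lambda>j. if j < Suc k then (\<lambda>z. (- \<i>) ^ r j * (deriv ^^ r j) (F j) z) else F j) \<theta>"
      using eq by simp
  qed
qed

definition Gf :: "complex \<Rightarrow> complex" where
  "Gf z = exp (\<i> * z / 2) / (1 - exp (\<i> * z))"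

definition SG :: "complex set" where "SG = {z. exp (\<i> * z) \<noteq> 1}"

abbreviation Gd :: "nat \<Rightarrow> complex \<Rightarrow> complex" where "Gd m \<equiv> (deriv ^^ m) Gf"

lemma open_SG: "open SG"
proof -
  have "SG = (\<lambda>z. exp (\<i> * z)) -` (- {1})" by (auto simp: SG_def)
  moreover have "open ((\<lambda>z. exp (\<i> * z)) -` (- {1}))"
    by (rule open_vimage) (auto intro!: continuous_intros)
  ultimately show ?thesis by simp
qed

lemma hol_Gf: "Gf holomorphic_on SG"
  unfolding Gf_def SG_def by (auto intro!: holomorphic_intros)

lemma Fth_PF: "Fth n t = PF n (\<lambda>j z. Gf (of_real t * z))"
proof (rule ext)
  fix \<theta> :: "nat \<Rightarrow> complex"
  have "exp (\<i> * of_real t / 2 * (\<Sum>j<n. \<theta> j)) = (\<Prod>j<n. exp (\<i> * (of_real t * \<theta> j) / 2))"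
    by (simp add: sum_distrib_left exp_sum[symmetric] sum_divide_distrib algebra_simps)
  then show "Fth n t \<theta> = PF n (\<lambda>j z. Gf (of_real t * z)) \<theta>"
    unfolding Fth_def PF_def Gf_def by (simp add: prod_dividef mult.assoc)
qed

lemma finite_terms: "finite (terms n s)"
proof -
  define B where "B = (\<lambda>f j. if j < n then f j else (0::nat)) ` (Pi\<^sub>E {..<n} (\<lambda>_. {..s+2}))"
  have fB: "finite B" unfolding B_def by (auto intro!: finite_PiE)
  have "terms n s \<subseteq> B \<times> {..s}"
  proof clarify
    fix r i assume ri: "(r, i) \<in> terms n s"
    then have r0: "\<forall>j. n \<le> j \<longrightarrow> r j = 0" and m: "2 * mabs n r - 2 + i \<le> s" "1 \<le> mabs n r"
      by (auto simp: terms_def multi_idx_def wt_def)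
    have "i \<le> s" using m by simp
    moreover have "r \<in> B"
    proof -
      have le: "r j \<le> s + 2" if "j < n" for j
      proof -
        have "r j \<le> mabs n r" unfolding mabs_def using that
          by (intro member_le_sum) auto
        then show ?thesis using m by simp
      qed
      have e: "r = (\<lambda>j. if j < n then restrict r {..<n} j else 0)"
        using r0 by (auto simp: fun_eq_iff)
      have m: "restrict r {..<n} \<in> Pi\<^sub>E {..<n} (\<lambda>_. {..s+2})" using le by auto
      show ?thesis unfolding B_def by (rule image_eqI[where x="restrict r {..<n}" and f="\<lambda>f j. if j < n then f j else (0::nat)", OF e m])
    qed
    ultimately show "r \<in> B \<and> i \<in> {..s}" by simp
  qed
  then show ?thesis by (rule finite_subset) (intro finite_cartesian_product fB finite_atMost)
qed

lemma tdom_UU: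
  assumes "t \<in> tdom n u"
  shows "(\<lambda>j. complex_of_real (u j)) \<in> UU n ((\<lambda>z. of_real t * z) -` SG)"
  using assms by (auto simp: tdom_def UU_def SG_def mult.assoc)

lemma Dmulti_Fth:
  assumes "t \<in> tdom n u"
  shows "Dmulti n r (Fth n t) (\<lambda>j. complex_of_real (u j)) =
    (\<Prod>j<n. (- \<i>) ^ r j * (of_real t) ^ r j * Gd (r j) (of_real (t * u j)))"
proof -
  let ?S = "(\<lambda>z. of_real t * z) -` SG"
  have oS: "open ?S"
    by (rule open_vimage[OF open_SG]) (auto intro!: continuous_intros)
  have hol: "(\<lambda>z. Gf (of_real t * z)) holomorphic_on ?S"
    by (rule holomorphic_on_compose_gen[of "\<lambda>z. of_real t * z" ?S Gf SG, unfolded o_def])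
       (auto intro!: holomorphic_intros hol_Gf)
  have "Dmulti n r (Fth n t) (\<lambda>j. complex_of_real (u j)) =
     PF n (\<lambda>j. if j < n then (\<lambda>z. (- \<i>) ^ r j * (deriv ^^ r j) (\<lambda>z. Gf (of_real t * z)) z) else (\<lambda>z. Gf (of_real t * z))) (\<lambda>j. complex_of_real (u j))"
    unfolding Fth_PF using Dmulti_PF[OF order_refl oS, where F="\<lambda>j z. Gf (of_real t * z)" and r=r] hol tdom_UU[OF assms]
    by blast
  also have "\<dots> = (\<Prod>j<n. (- \<i>) ^ r j * (of_real t) ^ r j * Gd (r j) (of_real (t * u j)))"
    unfolding PF_def
  proof (rule prod.cong[OF refl])
    fix j assume j: "j \<in> {..<n}"
    have "u j \<in> ?S" using tdom_UU[OF assms] j by (auto simp: UU_def)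
    then have "(deriv ^^ r j) (\<lambda>z. Gf (of_real t * z)) (of_real (u j)) = (of_real t) ^ r j * Gd (r j) (of_real t * of_real (u j))"
      by (intro higher_deriv_compose_linear[OF hol_Gf oS open_SG]) auto
    then show "(if j < n then \<lambda>z. (- \<i>) ^ r j * (deriv ^^ r j) (\<lambda>z. Gf (complex_of_real t * z)) z else (\<lambda>z. Gf (complex_of_real t * z))) (complex_of_real (u j)) =
         (- \<i>) ^ r j * complex_of_real t ^ r j * Gd (r j) (complex_of_real (t * u j))"
      using j by simp
  qed
  finally show ?thesis .
qed

lemma Dmulti_Fth':
  assumes "t \<in> tdom n u" "t \<noteq> 0"
  shows "(1 / of_real t) ^ mabs n r * Dmulti n r (Fth n t) (\<lambda>j. complex_of_real (u j)) =
    (- \<i>) ^ mabs n r * (\<Prod>j<n. Gd (r j) (of_real (t * u j)))"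
proof -
  have "(\<Prod>j<n. (- \<i>) ^ r j * (of_real t) ^ r j * Gd (r j) (of_real (t * u j)))
     = (\<Prod>j<n. (- \<i>) ^ r j) * (\<Prod>j<n. (of_real t) ^ r j) * (\<Prod>j<n. Gd (r j) (of_real (t * u j)))"
    by (simp only: prod.distrib)
  also have "\<dots> = (- \<i>) ^ mabs n r * (of_real t) ^ mabs n r * (\<Prod>j<n. Gd (r j) (of_real (t * u j)))"
    unfolding mabs_def power_sum by (rule refl)
  finally have e1: "(\<Prod>j<n. (- \<i>) ^ r j * (of_real t) ^ r j * Gd (r j) (of_real (t * u j)))
     = (- \<i>) ^ mabs n r * (of_real t) ^ mabs n r * (\<Prod>j<n. Gd (r j) (of_real (t * u j)))" .
  have e2: "(1 / complex_of_real t) ^ mabs n r * (of_real t) ^ mabs n r = 1"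
    using assms(2) by (simp add: power_mult_distrib[symmetric])
  have "(1 / of_real t) ^ mabs n r * Dmulti n r (Fth n t) (\<lambda>j. complex_of_real (u j))
     = ((1 / complex_of_real t) ^ mabs n r * (of_real t) ^ mabs n r) * ((- \<i>) ^ mabs n r * (\<Prod>j<n. Gd (r j) (of_real (t * u j))))"
    unfolding Dmulti_Fth[OF assms(1), of r] e1 by (simp only: ac_simps)
  then show ?thesis unfolding e2 by simp
qed

lemma VCoef_formula:
  assumes "t \<in> tdom n u" "t \<noteq> 0"
  shows "VCoef n u c s t = (\<Sum>(r,i)\<in>{x\<in>terms n s. wt n (fst x) (snd x) = s}.
      of_real (c r i) * ((- \<i>) ^ mabs n r * (\<Prod>j<n. Gd (r j) (of_real (t * u j)))))"
proof -
  have "VCoef n u c s t = (\<Sum>(r,i)\<in>terms n s. of_real (c r i) * (1 / of_real t) ^ mabs n r *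
       Dmulti n r (if s - wt n r i = 0 then Fth n t else (\<lambda>_. 0)) (\<lambda>j. of_real (u j)))"
    unfolding VCoef_def by simp
  also have "\<dots> = (\<Sum>(r,i)\<in>terms n s. if wt n r i = s then of_real (c r i) * ((- \<i>) ^ mabs n r * (\<Prod>j<n. Gd (r j) (of_real (t * u j)))) else 0)"
  proof (rule sum.cong[OF refl], clarify)
    fix r i assume "(r,i) \<in> terms n s"
    then have "wt n r i \<le> s" by (simp add: terms_def)
    then show "of_real (c r i) * (1 / of_real t) ^ mabs n r *
       Dmulti n r (if s - wt n r i = 0 then Fth n t else (\<lambda>_. 0)) (\<lambda>j. of_real (u j)) =
       (if wt n r i = s then of_real (c r i) * ((- \<i>) ^ mabs n r * (\<Prod>j<n. Gd (r j) (of_real (t * u j)))) else 0)"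
      using Dmulti_Fth'[OF assms, of r] by (auto simp: Dmulti_zero mult.assoc)
  qed
  also have "\<dots> = (\<Sum>(r,i)\<in>{x\<in>terms n s. wt n (fst x) (snd x) = s}.
      of_real (c r i) * ((- \<i>) ^ mabs n r * (\<Prod>j<n. Gd (r j) (of_real (t * u j)))))"
    by (subst sum.inter_filter[OF finite_terms]) (auto intro!: sum.cong simp: split_beta)
  finally show ?thesis .
qed

lemma inv_higher_deriv:
  "z \<noteq> 0 \<Longrightarrow> (deriv ^^ m) (\<lambda>w. \<i> / w) z = \<i> * (-1) ^ m * fact m / z ^ (m + 1)"
proof (induction m arbitrary: z)
  case 0 then show ?case by simp
next
  case (Suc m)
  let ?C = "\<i> * (-1) ^ m * fact m :: complex"
  have ev: "eventually (\<lambda>w. (deriv ^^ m) (\<lambda>w. \<i> / w) w = ?C / w ^ (m + 1)) (nhds z)"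
  proof -
    have "eventually (\<lambda>w. w \<in> - {0}) (nhds z)"
      using Suc.prems by (intro eventually_nhds_in_open) auto
    then show ?thesis by (rule eventually_mono) (use Suc.IH in auto)
  qed
  have d: "((\<lambda>w. ?C / w ^ (m + 1)) has_field_derivative (- ?C * of_nat (m+1) / z ^ (m + 2))) (at z)"
    using Suc.prems
    by (auto intro!: derivative_eq_intros simp: field_simps power2_eq_square; cases m; auto)
  have "(deriv ^^ Suc m) (\<lambda>w. \<i> / w) z = deriv (\<lambda>w. ?C / w ^ (m + 1)) z"
    using deriv_cong_ev[OF ev refl] by simp
  also have "\<dots> = - ?C * of_nat (m+1) / z ^ (m + 2)" by (rule DERIV_imp_deriv[OF d])
  also have "\<dots> = \<i> * (-1) ^ Suc m * fact (Suc m) / z ^ (Suc m + 1)"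
    by (simp add: algebra_simps)
  finally show ?case .
qed

lemma exp_ne1: "norm z < 2 * pi \<Longrightarrow> z \<noteq> 0 \<Longrightarrow> exp (\<i> * z) \<noteq> 1"
proof
  assume nz: "norm z < 2 * pi" "z \<noteq> 0" and e: "exp (\<i> * z) = 1"
  then obtain k :: int where k: "Im z = 0" "Re z = of_int (2 * k) * pi"
    unfolding exp_eq_1 by auto
  have "\<bar>Re z\<bar> < 2 * pi" using nz abs_Re_le_cmod[of z] by linarith
  then have "\<bar>of_int (2*k) * pi\<bar> < 2 * pi" using k by simp
  then have "\<bar>real_of_int k\<bar> < 1" by (simp add: abs_mult)
  then have "k = 0" by linarith
  then have "z = 0" using k by (simp add: complex_eq_iff)
  then show False using nz by simp
qed

definition Qf :: "complex \<Rightarrow> complex" where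
  "Qf z = (if z = 0 then - \<i> else (1 - exp (\<i> * z)) / z)"

lemma hol_Qf: "Qf holomorphic_on UNIV"
proof (rule no_isolated_singularity'[where K="{0}"])
  have d: "((\<lambda>z. 1 - exp (\<i> * z)) has_field_derivative - \<i>) (at 0)"
    by (auto intro!: derivative_eq_intros)
  then have "((\<lambda>h. ((1 - exp (\<i> * (0 + h))) - (1 - exp (\<i> * 0))) / h) \<longlongrightarrow> - \<i>) (at 0)"
    unfolding DERIV_def .
  moreover have "\<forall>\<^sub>F h in at 0. ((1 - exp (\<i> * (0 + h))) - (1 - exp (\<i> * 0))) / h = Qf h"
    by (auto simp: eventually_at_filter Qf_def)
  ultimately have "(Qf \<longlongrightarrow> - \<i>) (at 0)" by (rule tendsto_cong[THEN iffD1, rotated])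
  then show "\<And>z. z \<in> {0} \<Longrightarrow> (Qf \<longlongrightarrow> Qf z) (at z within UNIV)" by (simp add: Qf_def)
  show "Qf holomorphic_on UNIV - {0}"
    by (rule holomorphic_cong[THEN iffD2, OF refl, of _ Qf "\<lambda>z. (1 - exp (\<i> * z)) / z"])
       (auto simp: Qf_def intro!: holomorphic_intros)
qed auto

lemma Qf_ne0: "norm z < 2 * pi \<Longrightarrow> Qf z \<noteq> 0"
  using exp_ne1[of z] by (auto simp: Qf_def)

definition Kf :: "complex \<Rightarrow> complex" where
  "Kf z = exp (\<i> * z / 2) / Qf z"

lemma hol_Kf: "Kf holomorphic_on ball 0 (2 * pi)"
  unfolding Kf_def
  using Qf_ne0 holomorphic_on_subset[OF hol_Qf]
  by (auto intro!: holomorphic_intros)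

lemma Kf0: "Kf 0 = \<i>" by (simp add: Kf_def Qf_def)

definition Hf :: "complex \<Rightarrow> complex" where
  "Hf z = (if z = 0 then deriv Kf 0 else (Kf z - Kf 0) / z)"

lemma hol_Hf: "Hf holomorphic_on ball 0 (2 * pi)"
proof (rule no_isolated_singularity'[where K="{0}"])
  have "Kf field_differentiable at 0"
    using hol_Kf by (rule holomorphic_on_imp_differentiable_at) auto
  then have d: "(Kf has_field_derivative deriv Kf 0) (at 0)"
    by (simp add: DERIV_deriv_iff_field_differentiable)
  then have "((\<lambda>h. (Kf (0 + h) - Kf 0) / h) \<longlongrightarrow> deriv Kf 0) (at 0)"
    unfolding DERIV_def .
  moreover have "\<forall>\<^sub>F h in at 0. (Kf (0 + h) - Kf 0) / h = Hf h"
    by (auto simp: eventually_at_filter Hf_def)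
  ultimately have "(Hf \<longlongrightarrow> deriv Kf 0) (at 0)" by (rule tendsto_cong[THEN iffD1, rotated])
  then show "\<And>z. z \<in> {0} \<Longrightarrow> (Hf \<longlongrightarrow> Hf z) (at z within ball 0 (2*pi))"
    by (auto simp: Hf_def intro: tendsto_within_subset)
  show "Hf holomorphic_on ball 0 (2 * pi) - {0}"
    by (rule holomorphic_cong[THEN iffD2, OF refl, of _ Hf "\<lambda>z. (Kf z - Kf 0) / z"])
       (auto simp: Hf_def intro!: holomorphic_intros holomorphic_on_subset[OF hol_Kf])
qed auto

lemma Gf_decomp: "norm z < 2 * pi \<Longrightarrow> z \<noteq> 0 \<Longrightarrow> Gf z = \<i> / z + Hf z"
proof -
  assume z: "norm z < 2 * pi" "z \<noteq> 0"
  have q: "Qf z \<noteq> 0" using Qf_ne0 z by simp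
  have "Gf z = exp (\<i> * z / 2) / (z * Qf z)" using z by (simp add: Gf_def Qf_def)
  also have "\<dots> = Kf z / z" by (simp add: Kf_def)
  also have "\<dots> = \<i> / z + Hf z" using z by (simp add: Hf_def Kf0 field_simps)
  finally show ?thesis .
qed

lemma SG_ball: "ball 0 (2 * pi) - {0} \<subseteq> SG"
  using exp_ne1 by (auto simp: SG_def)

lemma Gd_decomp:
  assumes "norm z < 2 * pi" "z \<noteq> 0"
  shows "Gd m z = \<i> * (-1) ^ m * fact m / z ^ (m + 1) + (deriv ^^ m) Hf z"
proof -
  let ?S = "ball 0 (2 * pi) - {0}"
  have oS: "open ?S" by auto
  have zS: "z \<in> ?S" using assms by auto
  have h1: "Gf holomorphic_on ?S" using holomorphic_on_subset[OF hol_Gf SG_ball] .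
  have hH: "Hf holomorphic_on ?S" using holomorphic_on_subset[OF hol_Hf] by auto
  have hi: "(\<lambda>w. \<i> / w) holomorphic_on ?S" by (auto intro!: holomorphic_intros)
  have h2: "(\<lambda>w. \<i> / w + Hf w) holomorphic_on ?S" using hH hi by (auto intro!: holomorphic_intros)
  have "Gd m z = (deriv ^^ m) (\<lambda>w. \<i> / w + Hf w) z"
    by (rule higher_deriv_transform_within_open[OF h1 h2 oS zS]) (auto simp: Gf_decomp)
  also have "\<dots> = (deriv ^^ m) (\<lambda>w. \<i> / w) z + (deriv ^^ m) Hf z"
    by (rule higher_deriv_add[OF hi hH oS zS])
  finally show ?thesis using inv_higher_deriv assms by simp
qed

lemma isCont_Hd: "isCont ((deriv ^^ m) Hf) 0"
proof -
  have "continuous_on (ball 0 (2*pi)) ((deriv ^^ m) Hf)"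
    by (intro holomorphic_on_imp_continuous_on holomorphic_higher_deriv hol_Hf) auto
  then show ?thesis by (subst (asm) continuous_on_eq_continuous_at) auto
qed

lemma LI1:
  fixes b :: "nat \<Rightarrow> complex"
  assumes "finite M" "M \<subseteq> {..<N}"
    and "\<forall>x\<in>{0<..<2*pi}. (\<Sum>m\<in>M. b m * Gd m (of_real x)) = 0"
  shows "\<forall>m\<in>M. b m = 0"
  using assms
proof (induction N arbitrary: M)
  case 0 then show ?case by auto
next
  case (Suc N)
  define g where "g = (\<lambda>z. \<Sum>m\<in>M. b m * (\<i> * (-1) ^ m * fact m * z ^ (N - m) + z ^ (N+1) * (deriv ^^ m) Hf z))"
  have MN: "m \<le> N" if "m \<in> M" for m using Suc.prems that by auto
  have gx: "g (of_real x) = 0" if x: "x \<in> {0<..<2*pi}" for x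
  proof -
    let ?z = "complex_of_real x"
    have z: "norm ?z < 2 * pi" "?z \<noteq> 0" using x by auto
    have "g ?z = ?z ^ (N+1) * (\<Sum>m\<in>M. b m * Gd m ?z)"
      unfolding g_def sum_distrib_left
    proof (rule sum.cong[OF refl])
      fix m assume m: "m \<in> M"
      have e: "?z ^ m * ?z ^ (N - m) = ?z ^ N"
        using MN[OF m] by (simp add: power_add[symmetric])
      then show "b m * (\<i> * (-1) ^ m * fact m * ?z ^ (N - m) + ?z ^ (N+1) * (deriv ^^ m) Hf ?z) =
          ?z ^ (N+1) * (b m * Gd m ?z)"
        unfolding Gd_decomp[OF z] using z e by (simp add: field_simps)
    qed
    then show ?thesis using Suc.prems(3) x by simp
  qed
  have cont: "isCont g 0" unfolding g_def
    by (intro continuous_intros isCont_Hd)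
  have lim: "(\<lambda>k. g (of_real (1 / real (Suc k)))) \<longlonglongrightarrow> g 0"
  proof (rule isCont_tendsto_compose[OF cont])
    have l: "(\<lambda>k. 1 / real (Suc k)) \<longlonglongrightarrow> 0"
      using LIMSEQ_inverse_real_of_nat by (simp add: inverse_eq_divide)
    show "(\<lambda>k. complex_of_real (1 / real (Suc k))) \<longlonglongrightarrow> 0"
      using tendsto_of_real[OF l, where 'a=complex] by simp
  qed
  moreover have "(\<lambda>k. g (of_real (1 / real (Suc k)))) = (\<lambda>_. 0)"
  proof
    fix k
    have "1 / real (Suc k) \<le> 1" by simp
    moreover have "1 < 2 * pi" using pi_gt3 by simp
    ultimately have "1 / real (Suc k) < 2 * pi" by linarith
    then show "g (of_real (1 / real (Suc k))) = 0" by (intro gx) auto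
  qed
  ultimately have "(\<lambda>_. (0::complex)) \<longlonglongrightarrow> g 0" by simp
  then have g0: "g 0 = 0" unfolding LIMSEQ_const_iff by simp
  have g0': "g 0 = (\<Sum>m\<in>M. if m = N then b m * (\<i> * (-1) ^ m * fact m) else 0)"
    unfolding g_def
  proof (rule sum.cong[OF refl])
    fix m assume "m \<in> M"
    then have "m \<le> N" by (rule MN)
    then show "b m * (\<i> * (-1) ^ m * fact m * 0 ^ (N - m) + 0 ^ (N+1) * (deriv ^^ m) Hf 0) =
      (if m = N then b m * (\<i> * (-1) ^ m * fact m) else 0)" by auto
  qed
  have bN: "N \<in> M \<longrightarrow> b N = 0"
  proof
    assume "N \<in> M"
    then have "b N * (\<i> * (-1) ^ N * fact N) = 0" using g0 g0' Suc.prems(1)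
      by (simp add: sum.delta)
    then show "b N = 0" by simp
  qed
  have "\<forall>m\<in>M - {N}. b m = 0"
  proof (rule Suc.IH)
    show "finite (M - {N})" using Suc.prems by simp
    show "M - {N} \<subseteq> {..<N}" using Suc.prems by auto
    show "\<forall>x\<in>{0<..<2 * pi}. (\<Sum>m\<in>M - {N}. b m * Gd m (complex_of_real x)) = 0"
    proof
      fix x assume x: "x \<in> {0<..<2 * pi}"
      have "(\<Sum>m\<in>M. b m * Gd m (complex_of_real x)) = (\<Sum>m\<in>M - {N}. b m * Gd m (complex_of_real x))"
        using bN Suc.prems(1) by (cases "N \<in> M") (auto simp: sum.remove)
      then show "(\<Sum>m\<in>M - {N}. b m * Gd m (complex_of_real x)) = 0" using Suc.prems(3) x by simp
    qed
  qed
  then show ?case using bN by auto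
qed

lemma LIn:
  fixes a :: "(nat \<Rightarrow> nat) \<Rightarrow> complex"
  assumes "finite R" "R \<subseteq> multi_idx n"
    "\<forall>y. (\<forall>j<n. 0 < y j \<and> y j < 2*pi) \<longrightarrow> (\<Sum>r\<in>R. a r * (\<Prod>j<n. Gd (r j) (of_real (y j)))) = 0"
  shows "\<forall>r\<in>R. a r = 0"
  using assms
proof (induction n arbitrary: R a)
  case 0
  have R1: "R \<subseteq> {\<lambda>_. 0}" using 0 by (auto simp: multi_idx_def)
  show ?case
  proof
    fix r assume r: "r \<in> R"
    then have "R = {r}" using R1 by auto
    then show "a r = 0" using 0(3) by auto
  qed
next
  case (Suc n)
  show ?case
  proof
    fix r0 assume r0: "r0 \<in> R"
    define m0 where "m0 = r0 n"
    define Rm where "Rm = (\<lambda>m. {r\<in>R. r n = m})"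
    have bm0: "(\<Sum>r\<in>Rm m0. a r * (\<Prod>j<n. Gd (r j) (of_real (y j)))) = 0"
      if y: "\<forall>j<n. 0 < y j \<and> y j < 2*pi" for y
    proof -
      define b where "b = (\<lambda>m. \<Sum>r\<in>Rm m. a r * (\<Prod>j<n. Gd (r j) (of_real (y j))))"
      define M where "M = (\<lambda>r. r n) ` R"
      have fM: "finite M" using Suc.prems by (simp add: M_def)
      have MN: "M \<subseteq> {..<Suc (Max M)}" using fM by (auto simp: less_Suc_eq_le)
      have "\<forall>x\<in>{0<..<2*pi}. (\<Sum>m\<in>M. b m * Gd m (of_real x)) = 0"
      proof
        fix x assume x: "x \<in> {0<..<2*pi}"
        have "(\<Sum>m\<in>M. b m * Gd m (of_real x)) =
              (\<Sum>m\<in>M. \<Sum>r\<in>{r\<in>R. r n = m}. a r * (\<Prod>j<Suc n. Gd (r j) (of_real ((y(n:=x)) j))))"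
          unfolding b_def Rm_def sum_distrib_right
        proof (rule sum.cong[OF refl], rule sum.cong[OF refl])
          fix m r assume "r \<in> {r\<in>R. r n = m}"
          then have "r n = m" by simp
          then show "a r * (\<Prod>j<n. Gd (r j) (of_real (y j))) * Gd m (of_real x) =
                 a r * (\<Prod>j<Suc n. Gd (r j) (of_real ((y(n:=x)) j)))"
            by (simp add: prod.lessThan_Suc mult.assoc)
        qed
        also have "\<dots> = (\<Sum>r\<in>R. a r * (\<Prod>j<Suc n. Gd (r j) (of_real ((y(n:=x)) j))))"
          unfolding M_def by (rule sum.image_gen[symmetric]) (rule Suc.prems(1))
        also have "\<dots> = 0"
        proof -
          have "\<forall>j<Suc n. 0 < (y(n:=x)) j \<and> (y(n:=x)) j < 2*pi" using y x by (auto simp: less_Suc_eq)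
          then show ?thesis using Suc.prems(3) by blast
        qed
        finally show "(\<Sum>m\<in>M. b m * Gd m (of_real x)) = 0" .
      qed
      from LI1[OF fM MN this] have "b m0 = 0" using r0 by (auto simp: M_def m0_def)
      then show ?thesis by (simp add: b_def)
    qed
    define R' where "R' = (\<lambda>r. r(n:=0)) ` Rm m0"
    define a' where "a' = (\<lambda>\<rho>. a (\<rho>(n:=m0)))"
    have inj: "inj_on (\<lambda>r. r(n:=0)) (Rm m0)"
    proof (rule inj_onI)
      fix r r' assume "r \<in> Rm m0" "r' \<in> Rm m0" "r(n:=0) = r'(n:=0)"
      then show "r = r'" unfolding Rm_def fun_eq_iff by (metis (mono_tags, lifting) fun_upd_apply mem_Collect_eq)
    qed
    have "\<forall>\<rho>\<in>R'. a' \<rho> = 0"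
    proof (rule Suc.IH)
      show "finite R'" using Suc.prems(1) by (simp add: R'_def Rm_def)
      show "R' \<subseteq> multi_idx n" using Suc.prems(2) by (auto simp: R'_def Rm_def multi_idx_def)
      show "\<forall>y. (\<forall>j<n. 0 < y j \<and> y j < 2 * pi) \<longrightarrow> (\<Sum>r\<in>R'. a' r * (\<Prod>j<n. Gd (r j) (of_real (y j)))) = 0"
      proof (intro allI impI)
        fix y :: "nat \<Rightarrow> real" assume y: "\<forall>j<n. 0 < y j \<and> y j < 2 * pi"
        have "(\<Sum>r\<in>R'. a' r * (\<Prod>j<n. Gd (r j) (of_real (y j)))) =
              (\<Sum>r\<in>Rm m0. a' (r(n:=0)) * (\<Prod>j<n. Gd ((r(n:=0)) j) (of_real (y j))))"
          unfolding R'_def by (rule sum.reindex[OF inj, unfolded o_def])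
        also have "\<dots> = (\<Sum>r\<in>Rm m0. a r * (\<Prod>j<n. Gd (r j) (of_real (y j))))"
        proof (rule sum.cong[OF refl])
          fix r assume "r \<in> Rm m0"
          then have "(r(n:=0))(n:=m0) = r" by (auto simp: Rm_def)
          then show "a' (r(n:=0)) * (\<Prod>j<n. Gd ((r(n:=0)) j) (of_real (y j))) =
                a r * (\<Prod>j<n. Gd (r j) (of_real (y j)))"
            by (simp add: a'_def)
        qed
        also have "\<dots> = 0" using bm0 y by simp
        finally show "(\<Sum>r\<in>R'. a' r * (\<Prod>j<n. Gd (r j) (of_real (y j)))) = 0" .
      qed
    qed
    moreover have "r0(n:=0) \<in> R'" using r0 by (auto simp: R'_def Rm_def m0_def)
    ultimately have "a' (r0(n:=0)) = 0" by blast
    then show "a r0 = 0" by (simp add: a'_def m0_def)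
  qed
qed

lemma indep_setup:
  fixes u :: "nat \<Rightarrow> real"
  assumes uindep: "\<forall>q :: nat \<Rightarrow> rat. (\<Sum>j<n. of_rat (q j) * u j) = 0 \<longrightarrow> (\<forall>j<n. q j = 0)"
  defines "\<theta> \<equiv> (\<lambda>i. u i / (4 * pi))"
  shows "module.independent (\<lambda>r. (*) (real_of_int r)) (\<theta> ` {..<n})" and "inj_on \<theta> {..<n}"
proof -
  interpret Modules.module "(\<lambda>r. (*) (real_of_int r))"
    by (simp add: Modules.module.intro distrib_left mult.commute)
  show inj: "inj_on \<theta> {..<n}"
  proof (rule inj_onI, rule ccontr)
    fix i j assume ij: "i \<in> {..<n}" "j \<in> {..<n}" "\<theta> i = \<theta> j" "i \<noteq> j"
    then have uij: "u i = u j" by (simp add: \<theta>_def)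
    define q :: "nat \<Rightarrow> rat" where "q = (\<lambda>k. if k = i then 1 else if k = j then -1 else 0)"
    have "(\<Sum>k<n. of_rat (q k) * u k) = (\<Sum>k\<in>{i,j}. of_rat (q k) * u k)"
      by (rule sum.mono_neutral_right) (use ij in \<open>auto simp: q_def\<close>)
    also have "\<dots> = 0" using ij uij by (simp add: q_def)
    finally have "q i = 0" using uindep ij by auto
    then show False by (simp add: q_def)
  qed
  show "independent (\<theta> ` {..<n})"
    unfolding independent_explicit_module
  proof (intro allI impI)
    fix T c v
    assume T: "finite T" "T \<subseteq> \<theta> ` {..<n}" "(\<Sum>v\<in>T. real_of_int (c v) * v) = 0" "v \<in> T"
    define J where "J = {j\<in>{..<n}. \<theta> j \<in> T}"
    have injJ: "inj_on \<theta> J" using inj by (rule inj_on_subset) (auto simp: J_def)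
    have imJ: "\<theta> ` J = T" using T(2) by (auto simp: J_def)
    define q :: "nat \<Rightarrow> rat" where "q = (\<lambda>j. if j \<in> J then of_int (c (\<theta> j)) else 0)"
    have "(\<Sum>j<n. of_rat (q j) * u j) = (\<Sum>j\<in>J. of_rat (q j) * u j)"
      by (rule sum.mono_neutral_right) (auto simp: q_def J_def)
    also have "\<dots> = (\<Sum>j\<in>J. 4 * pi * (real_of_int (c (\<theta> j)) * \<theta> j))"
      by (rule sum.cong[OF refl]) (simp add: q_def \<theta>_def)
    also have "\<dots> = 4 * pi * (\<Sum>v\<in>T. real_of_int (c v) * v)"
      unfolding sum_distrib_left[symmetric] imJ[symmetric] sum.reindex[OF injJ] by simp
    also have "\<dots> = 0" using T by simp
    finally have q0: "\<forall>j<n. q j = 0" using uindep by blast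
    obtain j where j: "j \<in> J" "\<theta> j = v" using imJ T(4) by auto
    then have "q j = of_int (c v)" by (simp add: q_def)
    moreover have "j < n" using j by (simp add: J_def)
    ultimately show "c v = 0" using q0 by simp
  qed
qed

lemma Gf_per: "Gf (w + complex_of_real (4 * pi * of_int h)) = Gf w"
proof -
  have e1: "exp (\<i> * complex_of_real (4 * pi * of_int h) / 2) = 1"
    using exp_integer_2pi[of "of_int h"] by (simp add: mult_ac)
  have e2: "exp (\<i> * complex_of_real (4 * pi * of_int h)) = 1"
    using exp_integer_2pi[of "of_int (2*h)"] by (simp add: mult_ac)
  have "exp (\<i> * (w + complex_of_real (4 * pi * of_int h)) / 2) = exp (\<i> * w / 2) * exp (\<i> * complex_of_real (4 * pi * of_int h) / 2)"
    by (simp add: exp_add[symmetric] algebra_simps add_divide_distrib)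
  moreover have "exp (\<i> * (w + complex_of_real (4 * pi * of_int h))) = exp (\<i> * w) * exp (\<i> * complex_of_real (4 * pi * of_int h))"
    by (simp add: exp_add[symmetric] algebra_simps)
  ultimately show ?thesis unfolding Gf_def using e1 e2 by simp
qed

lemma SG_per: "w \<in> SG \<Longrightarrow> w + complex_of_real (4 * pi * of_int h) \<in> SG"
proof -
  have e2: "exp (\<i> * complex_of_real (4 * pi * of_int h)) = 1"
    using exp_integer_2pi[of "of_int (2*h)"] by (simp add: mult_ac)
  have "exp (\<i> * (w + complex_of_real (4 * pi * of_int h))) = exp (\<i> * w) * exp (\<i> * complex_of_real (4 * pi * of_int h))"
    by (simp add: exp_add[symmetric] algebra_simps)
  then show "w \<in> SG \<Longrightarrow> w + complex_of_real (4 * pi * of_int h) \<in> SG" using e2 by (simp add: SG_def)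
qed

lemma Gd_per:
  assumes "z \<in> SG"
  shows "Gd m (z + complex_of_real (4 * pi * of_int h)) = Gd m z"
proof -
  let ?c = "complex_of_real (4 * pi * of_int h)"
  have "(deriv ^^ m) (\<lambda>w. Gf (1 * w + ?c)) z = 1 ^ m * Gd m (1 * z + ?c)"
    by (rule higher_deriv_compose_linear'[OF hol_Gf open_SG open_SG assms]) (use SG_per in simp_all)
  moreover have "(\<lambda>w. Gf (1 * w + ?c)) = Gf" by (rule ext) (simp only: mult_1_left Gf_per)
  ultimately show ?thesis by simp
qed

lemma isCont_Gd: "z \<in> SG \<Longrightarrow> isCont (Gd m) z"
  using holomorphic_on_imp_continuous_on[OF holomorphic_higher_deriv[OF hol_Gf open_SG, of m]]
    continuous_on_eq_continuous_at[OF open_SG] by blast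

lemma box_SG: "0 < x \<Longrightarrow> x < 2 * pi \<Longrightarrow> complex_of_real x \<in> SG"
  using exp_ne1[of "complex_of_real x"] by (auto simp: SG_def)

lemma LI_t:
  fixes u :: "nat \<Rightarrow> real" and a :: "(nat \<Rightarrow> nat) \<Rightarrow> complex"
  assumes uindep: "\<forall>q :: nat \<Rightarrow> rat. (\<Sum>j<n. of_rat (q j) * u j) = 0 \<longrightarrow> (\<forall>j<n. q j = 0)"
    and fR: "finite R" and RM: "R \<subseteq> multi_idx n"
    and hyp: "\<forall>t\<in>tdom n u. (\<Sum>r\<in>R. a r * (\<Prod>j<n. Gd (r j) (of_real (t * u j)))) = 0"
  shows "\<forall>r\<in>R. a r = 0"
proof (rule LIn[OF fR RM], intro allI impI)
  fix y :: "nat \<Rightarrow> real" assume y: "\<forall>j<n. 0 < y j \<and> y j < 2*pi"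
  define \<theta> where "\<theta> = (\<lambda>i. u i / (4*pi))"
  define \<alpha> where "\<alpha> = (\<lambda>i. y i / (4*pi))"
  define \<Phi> where "\<Phi> = (\<lambda>z. \<Sum>r\<in>R. a r * (\<Prod>j<n. Gd (r j) (of_real (z j))))"
  have ind: "module.independent (\<lambda>r. (*) (real_of_int r)) (\<theta> ` {..<n})" "inj_on \<theta> {..<n}"
    using indep_setup[OF uindep] unfolding \<theta>_def by auto
  have "\<forall>k. \<exists>t h. \<forall>i<n. \<bar>t * \<theta> i - of_int (h i) - \<alpha> i\<bar> < 1 / (4 * pi * real (Suc k))"
  proof
    fix k
    have "1 / (4 * pi * real (Suc k)) > 0" by simp
    from Kronecker_thm_1[OF ind this, of \<alpha>] show "\<exists>t h. \<forall>i<n. \<bar>t * \<theta> i - of_int (h i) - \<alpha> i\<bar> < 1 / (4 * pi * real (Suc k))"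
      by metis
  qed
  then obtain T H where TH: "\<And>k i. i < n \<Longrightarrow> \<bar>T k * \<theta> i - of_int (H k i) - \<alpha> i\<bar> < 1 / (4 * pi * real (Suc k))"
    by metis
  define x where "x = (\<lambda>k j. T k * u j - 4 * pi * of_int (H k j))"
  have xlim: "(\<lambda>k. x k j) \<longlonglongrightarrow> y j" if j: "j < n" for j
  proof -
    have b: "norm (x k j - y j) \<le> 1 / real (Suc k)" for k
    proof -
      have "x k j - y j = 4 * pi * (T k * \<theta> j - of_int (H k j) - \<alpha> j)"
        by (simp add: x_def \<theta>_def \<alpha>_def algebra_simps)
      then have "norm (x k j - y j) = 4 * pi * \<bar>T k * \<theta> j - of_int (H k j) - \<alpha> j\<bar>"
        by (simp add: abs_mult)
      also have "\<dots> \<le> 4 * pi * (1 / (4 * pi * real (Suc k)))"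
        using TH[OF j, of k] by (intro mult_left_mono) auto
      also have "\<dots> = 1 / real (Suc k)" by simp
      finally show ?thesis .
    qed
    have l: "(\<lambda>k. 1 / real (Suc k)) \<longlonglongrightarrow> 0"
      using LIMSEQ_inverse_real_of_nat by (simp add: inverse_eq_divide)
    have "(\<lambda>k. x k j - y j) \<longlonglongrightarrow> 0"
      by (rule Lim_null_comparison[OF _ l]) (use b in auto)
    then have "(\<lambda>k. (x k j - y j) + y j) \<longlonglongrightarrow> 0 + y j" by (intro tendsto_intros)
    then show ?thesis by simp
  qed
  have lim: "(\<lambda>k. \<Phi> (x k)) \<longlonglongrightarrow> \<Phi> y"
    unfolding \<Phi>_def
  proof (intro tendsto_intros)
    fix r j assume "j \<in> {..<n}"
    then have j: "j < n" by simp
    have l: "(\<lambda>k. complex_of_real (x k j)) \<longlonglongrightarrow> complex_of_real (y j)"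
      by (intro tendsto_intros xlim j)
    have c: "isCont (Gd (r j)) (complex_of_real (y j))"
      using isCont_Gd[OF box_SG] y j by auto
    show "(\<lambda>k. Gd (r j) (complex_of_real (x k j))) \<longlonglongrightarrow> Gd (r j) (complex_of_real (y j))"
      by (rule isCont_tendsto_compose[OF c l])
  qed
  have ev: "eventually (\<lambda>k. \<forall>j\<in>{..<n}. 0 < x k j \<and> x k j < 2 * pi) sequentially"
  proof (rule eventually_ball_finite)
    show "\<forall>j\<in>{..<n}. eventually (\<lambda>k. 0 < x k j \<and> x k j < 2 * pi) sequentially"
    proof
      fix j assume "j \<in> {..<n}"
      then have j: "j < n" by simp
      show "eventually (\<lambda>k. 0 < x k j \<and> x k j < 2 * pi) sequentially"
        using order_tendstoD(1)[OF xlim[OF j], of 0] order_tendstoD(2)[OF xlim[OF j], of "2*pi"] y j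
        by (auto intro: eventually_conj)
    qed
  qed auto
  have "eventually (\<lambda>k. \<Phi> (x k) = 0) sequentially"
    using ev
  proof (rule eventually_mono)
    fix k assume xk: "\<forall>j\<in>{..<n}. 0 < x k j \<and> x k j < 2 * pi"
    have eq: "complex_of_real (T k * u j) = complex_of_real (x k j) + complex_of_real (4 * pi * of_int (H k j))" for j
      by (simp add: x_def)
    have "T k \<in> tdom n u"
      unfolding tdom_def
    proof (intro CollectI allI impI)
      fix j assume j: "j < n"
      have "complex_of_real (x k j) + complex_of_real (4 * pi * of_int (H k j)) \<in> SG"
        by (rule SG_per, rule box_SG) (use xk j in auto)
      then show "exp (\<i> * complex_of_real (T k) * complex_of_real (u j)) \<noteq> 1"
        unfolding eq[symmetric] SG_def by (simp add: mult.assoc)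
    qed
    then have "(\<Sum>r\<in>R. a r * (\<Prod>j<n. Gd (r j) (of_real (T k * u j)))) = 0" using hyp by blast
    moreover have "(\<Sum>r\<in>R. a r * (\<Prod>j<n. Gd (r j) (of_real (T k * u j)))) = \<Phi> (x k)"
      unfolding \<Phi>_def
    proof (intro sum.cong refl arg_cong2[where f="(*)"] prod.cong)
      fix r j assume "j \<in> {..<n}"
      then have j: "j < n" by simp
      show "Gd (r j) (of_real (T k * u j)) = Gd (r j) (of_real (x k j))"
        unfolding eq by (rule Gd_per, rule box_SG) (use xk j in auto)
    qed
    ultimately show "\<Phi> (x k) = 0" by simp
  qed
  then have "(\<lambda>k. \<Phi> (x k)) \<longlonglongrightarrow> 0" by (rule tendsto_eventually)
  from LIMSEQ_unique[OF lim this] show "(\<Sum>r\<in>R. a r * (\<Prod>j<n. Gd (r j) (of_real (y j)))) = 0"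
    by (simp add: \<Phi>_def)
qed

lemma tdom_nz: "0 < n \<Longrightarrow> t \<in> tdom n u \<Longrightarrow> t \<noteq> 0"
  by (auto simp: tdom_def)

lemma VCoef_eq_step:
  fixes c c' :: "(nat \<Rightarrow> nat) \<Rightarrow> nat \<Rightarrow> real"
  assumes c: "BNF_coeffs n c" and c': "BNF_coeffs n c'"
    and ag: "\<forall>(r,i)\<in>terms n s. wt n r i < s \<longrightarrow> c r i = c' r i"
    and tr: "TrCoef n u c s t = TrCoef n u c' s t" and t0: "t \<noteq> 0"
  shows "VCoef n u c s t = VCoef n u c' s t"
proof (cases "s = 0")
  case True
  then show ?thesis unfolding VCoef_def using Pw_Suc_0[OF c, of t 0] Pw_Suc_0[OF c', of t 0] by simp
next
  case False
  define f where "f = (\<lambda>c m. (\<i> * complex_of_real t) ^ m / of_nat (fact m) * Pw n c t m s (\<lambda>j. of_real (u j)))"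
  have oth: "f c m = f c' m" if m1: "m \<noteq> 1" for m
  proof (cases m)
    case 0 then show ?thesis by (simp add: f_def)
  next
    case (Suc m')
    then obtain m'' where "m = Suc (Suc m'')" using m1 by (cases m') auto
    then show ?thesis using Pw_SS[OF c c' ag] by (simp add: f_def)
  qed
  have s1: "1 \<in> {..s}" using False by simp
  have "f c 1 + (\<Sum>m\<in>{..s}-{1}. f c m) = f c' 1 + (\<Sum>m\<in>{..s}-{1}. f c' m)"
    using tr unfolding TrCoef_def sum.remove[OF finite_atMost s1] f_def .
  moreover have "(\<Sum>m\<in>{..s}-{1}. f c m) = (\<Sum>m\<in>{..s}-{1}. f c' m)"
    by (rule sum.cong) (auto intro: oth)
  ultimately have "f c 1 = f c' 1" by simp
  then show ?thesis using t0 by (simp add: f_def VCoef_def)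
qed

lemma agree_step:
  fixes u :: "nat \<Rightarrow> real" and c c' :: "(nat \<Rightarrow> nat) \<Rightarrow> nat \<Rightarrow> real"
  assumes n0: "0 < n"
    and uindep: "\<forall>q :: nat \<Rightarrow> rat. (\<Sum>j<n. of_rat (q j) * u j) = 0 \<longrightarrow> (\<forall>j<n. q j = 0)"
    and c: "BNF_coeffs n c" and c': "BNF_coeffs n c'"
    and ag: "\<forall>(r,i)\<in>terms n s. wt n r i < s \<longrightarrow> c r i = c' r i"
    and tr: "\<forall>t\<in>tdom n u. TrCoef n u c s t = TrCoef n u c' s t"
  shows "\<forall>(r,i)\<in>terms n s. c r i = c' r i"
proof -
  define Ts where "Ts = {x\<in>terms n s. wt n (fst x) (snd x) = s}"
  define \<iota> where "\<iota> = (\<lambda>r. s + 2 - 2 * mabs n r)"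
  define R where "R = fst ` Ts"
  have Tsi: "x \<in> Ts \<Longrightarrow> snd x = \<iota> (fst x)" for x
    by (auto simp: Ts_def terms_def wt_def \<iota>_def)
  have TsR: "Ts = (\<lambda>r. (r, \<iota> r)) ` R"
  proof
    show "Ts \<subseteq> (\<lambda>r. (r, \<iota> r)) ` R"
    proof
      fix x assume x: "x \<in> Ts"
      then have "x = (fst x, \<iota> (fst x))" using Tsi by (metis prod.collapse)
      then show "x \<in> (\<lambda>r. (r, \<iota> r)) ` R" using x unfolding R_def by blast
    qed
    show "(\<lambda>r. (r, \<iota> r)) ` R \<subseteq> Ts"
    proof
      fix x assume "x \<in> (\<lambda>r. (r, \<iota> r)) ` R"
      then obtain y where y: "y \<in> Ts" "x = (fst y, \<iota> (fst y))" unfolding R_def by auto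
      then have "x = y" using Tsi[OF y(1)] by (metis prod.collapse)
      then show "x \<in> Ts" using y by simp
    qed
  qed
  have fR: "finite R" unfolding R_def Ts_def using finite_terms by simp
  have RM: "R \<subseteq> multi_idx n" unfolding R_def Ts_def terms_def by auto
  define a where "a = (\<lambda>r. (complex_of_real (c r (\<iota> r)) - complex_of_real (c' r (\<iota> r))) * (- \<i>) ^ mabs n r)"
  have "\<forall>t\<in>tdom n u. (\<Sum>r\<in>R. a r * (\<Prod>j<n. Gd (r j) (of_real (t * u j)))) = 0"
  proof
    fix t assume t: "t \<in> tdom n u"
    have t0: "t \<noteq> 0" using tdom_nz[OF n0 t] .
    have "VCoef n u c s t = VCoef n u c' s t"
      by (rule VCoef_eq_step[OF c c' ag]) (use tr t t0 in auto)
    then have "(\<Sum>(r,i)\<in>Ts. of_real (c r i) * ((- \<i>) ^ mabs n r * (\<Prod>j<n. Gd (r j) (of_real (t * u j)))))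
       = (\<Sum>(r,i)\<in>Ts. of_real (c' r i) * ((- \<i>) ^ mabs n r * (\<Prod>j<n. Gd (r j) (of_real (t * u j)))))"
      unfolding VCoef_formula[OF t t0] Ts_def .
    then have "(\<Sum>r\<in>R. of_real (c r (\<iota> r)) * ((- \<i>) ^ mabs n r * (\<Prod>j<n. Gd (r j) (of_real (t * u j)))))
       = (\<Sum>r\<in>R. of_real (c' r (\<iota> r)) * ((- \<i>) ^ mabs n r * (\<Prod>j<n. Gd (r j) (of_real (t * u j)))))"
      unfolding TsR by (subst (asm) (1 2) sum.reindex) (auto intro: inj_onI)
    then have eq: "(\<Sum>r\<in>R. of_real (c r (\<iota> r)) * ((- \<i>) ^ mabs n r * (\<Prod>j<n. Gd (r j) (of_real (t * u j)))))
       - (\<Sum>r\<in>R. of_real (c' r (\<iota> r)) * ((- \<i>) ^ mabs n r * (\<Prod>j<n. Gd (r j) (of_real (t * u j))))) = 0"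
      by simp
    have "(\<Sum>r\<in>R. a r * (\<Prod>j<n. Gd (r j) (of_real (t * u j)))) =
      (\<Sum>r\<in>R. of_real (c r (\<iota> r)) * ((- \<i>) ^ mabs n r * (\<Prod>j<n. Gd (r j) (of_real (t * u j))))
       - of_real (c' r (\<iota> r)) * ((- \<i>) ^ mabs n r * (\<Prod>j<n. Gd (r j) (of_real (t * u j)))))"
      by (rule sum.cong[OF refl]) (simp add: a_def algebra_simps)
    also have "\<dots> = 0" unfolding sum_subtractf using eq .
    finally show "(\<Sum>r\<in>R. a r * (\<Prod>j<n. Gd (r j) (of_real (t * u j)))) = 0" .
  qed
  from LI_t[OF uindep fR RM this] have a0: "\<forall>r\<in>R. a r = 0" .
  show ?thesis
  proof (clarify)
    fix r i assume ri: "(r, i) \<in> terms n s"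
    show "c r i = c' r i"
    proof (cases "wt n r i < s")
      case True then show ?thesis using ag ri by auto
    next
      case False
      then have "(r,i) \<in> Ts" using ri by (auto simp: Ts_def terms_def)
      then have "r \<in> R" "i = \<iota> r" using Tsi[of "(r,i)"] unfolding R_def by (force, simp)
      then show ?thesis using a0 by (auto simp: a_def)
    qed
  qed
qed

theorem theorem4:
  fixes n :: nat and u :: "nat \<Rightarrow> real" and l :: nat
    and c c' :: "(nat \<Rightarrow> nat) \<Rightarrow> nat \<Rightarrow> real"
  assumes upos: "\<forall>j<n. u j > 0"
    and uindep: "\<forall>q :: nat \<Rightarrow> rat. (\<Sum>j<n. of_rat (q j) * u j) = 0 \<longrightarrow> (\<forall>j<n. q j = 0)"
    and c: "BNF_coeffs n c" and c': "BNF_coeffs n c'"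
    and tr: "\<forall>s\<le>l. \<forall>t\<in>tdom n u. TrCoef n u c s t = TrCoef n u c' s t"
  shows "\<forall>s\<le>l. \<forall>t\<in>tdom n u. VCoef n u c s t = VCoef n u c' s t"
proof (cases "n = 0")
  case True
  then have "terms n s = {}" for s by (auto simp: terms_def mabs_def)
  then show ?thesis by (simp add: VCoef_def)
next
  case False
  then have n0: "0 < n" by simp
  have AG: "s \<le> l \<Longrightarrow> \<forall>(r,i)\<in>terms n s. c r i = c' r i" for s
  proof (induction s)
    case 0
    show ?case
      by (rule agree_step[OF n0 uindep c c']) (use tr 0 in auto)
  next
    case (Suc s)
    have "\<forall>(r,i)\<in>terms n s. c r i = c' r i" using Suc by simp
    then have ag: "\<forall>(r,i)\<in>terms n (Suc s). wt n r i < Suc s \<longrightarrow> c r i = c' r i"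
      by (auto simp: terms_def)
    show ?case
      by (rule agree_step[OF n0 uindep c c' ag]) (use tr Suc.prems in auto)
  qed
  show ?thesis
  proof (intro allI impI ballI)
    fix s t assume s: "s \<le> l" and t: "t \<in> tdom n u"
    show "VCoef n u c s t = VCoef n u c' s t"
      unfolding VCoef_def Pw_agree[OF AG[OF order_refl] s] by (rule refl)
  qed
qed

end
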